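(* Let $\mathrm{pr}:\mathrm{GL}_3(A)\to\mathrm{GL}_3(\mathbb{F}_q)$ be reduction modulo $t$. For integers $0\le j\le k$, $$\mathrm{pr}(\mathrm{GL}_3(A)_{[j,k]})=\begin{cases}\mathrm{GL}_3(\mathbb{F}_q)&\text{if }0=j=k,\\ P_0&\text{if }0=j<k,\\ P_2&\text{if }0<j=k,\\ B&\text{if }0<j<k.\end{cases}$$ For a higher-dimensional simplex $w$ all of whose vertices are of the form $[j,k]$ with $0\le j\le k$, $\mathrm{pr}(\mathrm{GL}_3(A)_w)=\bigcap_{v\in w}\mathrm{pr}(\mathrm{GL}_3(A)_v)$.
   Context: Let $q$ be a prime power, $A=\mathbb{F}_q[t]$, $F_\infty=\mathbb{F}_q((1/t))$, $\pi=1/t$, $\mathcal{O}_\infty=\mathbb{F}_q[[\pi]]$. $\mathcal{B}$ is the Bruhat–Tits building of $\mathrm{PGL}_3(F_\infty)$ (vertices: homothety classes of $\mathcal{O}_\infty$-lattices in $F_\infty^3$; simplices: sets $\{v_0,\dots,v_k\}$ with representatives $L_0\supsetneq\cdots\supsetneq L_k\supsetneq\pi L_0$), with $\mathrm{GL}_3(A)$ acting by $g[L]=[gL]$; $\mathrm{GL}_3(A)_w$ is the stabilizer of $w$. $[j,k]$ is the class of the lattice spanned by $e_1,\pi^je_2,\pi^ke_3$. $B\subset\mathrm{GL}_3(\mathbb{F}_q)$ is the group of invertible upper triangular matrices; $P_0$ is the group of $(a_{rs})\in\mathrm{GL}_3(\mathbb{F}_q)$ with $a_{31}=a_{32}=0$;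 $P_2$ is the group with $a_{21}=a_{31}=0$. *)

theory Defs
  imports "HOL-Analysis.Analysis" "HOL-Computational_Algebra.Computational_Algebra"
begin

text \<open>Throughout, the finite field F_q is a type variable 'a of class finite field;
  A = F_q[t] is the type 'a poly; F_infinity = F_q((1/t)) is the Laurent series type
  'a fls in the uniformizer pi = 1/t = fls_X; vectors in F_infinity^3 are 'a fls ^ 3.
  Indices of the numeral type 3 are written 1, 2, 3 (for e_1, e_2, e_3).\<close>

definition O_inf :: "'a::field fls set" where
  "O_inf = {x. x = 0 \<or> fls_subdegree x \<ge> 0}"

definition poly_to_Finf :: "'a::field poly \<Rightarrow> 'a fls" where
  "poly_to_Finf p = (\<Sum>i\<le>degree p. fls_const (coeff p i) * fls_X_inv ^ i)"

definition mat_to_Finf :: "'a::field poly ^3^3 \<Rightarrow> 'a fls ^3^3" where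
  "mat_to_Finf g = (\<chi> i j. poly_to_Finf (g $ i $ j))"

definition lattice_span :: "'a::field fls ^3^3 \<Rightarrow> ('a fls ^3) set" where
  "lattice_span M = {M *v c | c. \<forall>i. c $ i \<in> O_inf}"

definition is_lattice :: "('a::field fls ^3) set \<Rightarrow> bool" where
  "is_lattice L \<longleftrightarrow> (\<exists>M. det M \<noteq> 0 \<and> L = lattice_span M)"

definition lat_class :: "('a::field fls ^3) set \<Rightarrow> ('a fls ^3) set set" where
  "lat_class L = {(\<lambda>v. c *s v) ` L | c. c \<noteq> 0}"

definition is_vertex :: "('a::field fls ^3) set set \<Rightarrow> bool" where
  "is_vertex v \<longleftrightarrow> (\<exists>L. is_lattice L \<and> v = lat_class L)"

definition is_simplex :: "('a::field fls ^3) set set set \<Rightarrow> bool" where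
  "is_simplex W \<longleftrightarrow> (\<exists>Ls. Ls \<noteq> [] \<and> (\<forall>L\<in>set Ls. is_lattice L) \<and>
      W = lat_class ` set Ls \<and> sorted_wrt (\<supset>) Ls \<and>
      (\<forall>L\<in>set Ls. (\<lambda>v. fls_X *s v) ` hd Ls \<subset> L))"

definition GL3A :: "('a::field poly ^3^3) set" where
  "GL3A = {g. is_unit (det g)}"

definition GL3F :: "('a::field ^3^3) set" where
  "GL3F = {M. det M \<noteq> 0}"

definition vact :: "'a::field poly ^3^3 \<Rightarrow> ('a fls ^3) set set \<Rightarrow> ('a fls ^3) set set" where
  "vact g v = (\<lambda>L. (\<lambda>x. mat_to_Finf g *v x) ` L) ` v"

definition stab_vertex :: "('a::field fls ^3) set set \<Rightarrow> ('a poly ^3^3) set" where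
  "stab_vertex v = {g \<in> GL3A. vact g v = v}"

definition stab_simplex :: "('a::field fls ^3) set set set \<Rightarrow> ('a poly ^3^3) set" where
  "stab_simplex W = {g \<in> GL3A. vact g ` W = W}"

definition vtx :: "nat \<Rightarrow> nat \<Rightarrow> ('a::field fls ^3) set set" where
  "vtx j k = lat_class (lattice_span (\<chi> r s. if r = s then
       (if r = 1 then 1 else if r = 2 then fls_X ^ j else fls_X ^ k) else 0))"

definition pr :: "'a::field poly ^3^3 \<Rightarrow> 'a ^3^3" where
  "pr g = (\<chi> r s. poly (g $ r $ s) 0)"

definition Borel :: "('a::field ^3^3) set" where
  "Borel = {M \<in> GL3F. M $ 2 $ 1 = 0 \<and> M $ 3 $ 1 = 0 \<and> M $ 3 $ 2 = 0}"

definition P0 :: "('a::field ^3^3) set" where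
  "P0 = {M \<in> GL3F. M $ 3 $ 1 = 0 \<and> M $ 3 $ 2 = 0}"

definition P2 :: "('a::field ^3^3) set" where
  "P2 = {M \<in> GL3F. M $ 2 $ 1 = 0 \<and> M $ 3 $ 1 = 0}"

end

theory Submission
  imports Defs
begin


definition gev :: "int \<Rightarrow> 'a::field fls \<Rightarrow> bool" where
  "gev K x \<longleftrightarrow> x = 0 \<or> K \<le> fls_subdegree x"

lemma gev_0[simp]: "gev K 0" by (simp add: gev_def)

lemma gev_mono: "gev K x \<Longrightarrow> K' \<le> K \<Longrightarrow> gev K' x"
  by (auto simp: gev_def)

lemma gev_add: assumes "gev K x" "gev K y" shows "gev K (x + y)"
proof (cases "x + y = 0 \<or> x = 0 \<or> y = 0")
  case True then show ?thesis using assms by (auto simp: gev_def)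
next
  case False
  then have "min (fls_subdegree x) (fls_subdegree y) \<le> fls_subdegree (x + y)"
    using fls_plus_subdegree by blast
  then show ?thesis using assms False by (auto simp: gev_def)
qed

lemma gev_uminus: "gev K x \<Longrightarrow> gev K (- x)"
  by (auto simp: gev_def)

lemma gev_diff: "gev K x \<Longrightarrow> gev K y \<Longrightarrow> gev K (x - y)"
  using gev_add[of K x "-y"] gev_uminus[of K y] by simp

lemma gev_mult: "gev a x \<Longrightarrow> gev b y \<Longrightarrow> gev (a + b) (x * y)"
  by (cases "x = 0"; cases "y = 0") (auto simp: gev_def fls_subdegree_mult)

lemma gev_sum: "finite A \<Longrightarrow> (\<And>i. i \<in> A \<Longrightarrow> gev K (f i)) \<Longrightarrow> gev K (\<Sum>i\<in>A. f i)"
  by (induction A rule: finite_induct) (auto intro: gev_add)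

lemma gev_mult3: "gev a x \<Longrightarrow> gev b y \<Longrightarrow> gev c z \<Longrightarrow> K \<le> a + b + c \<Longrightarrow> gev K (x * y * z)"
  by (rule gev_mono[OF gev_mult[OF gev_mult]])

lemma det_weighted:
  fixes M :: "'a::field fls ^3^3"
  assumes "\<And>r s. gev (a r + b s) (M $ r $ s)"
  shows "gev (a 1 + a 2 + a 3 + b 1 + b 2 + b 3) (det M)"
  unfolding det_3
  by (intro gev_diff gev_add; rule gev_mult3[OF assms assms assms]; simp)

definition lbox :: "(3 \<Rightarrow> int) \<Rightarrow> ('a::field fls ^3) set" where
  "lbox e = {x. \<forall>r. gev (e r) (x $ r)}"

lemma gev_subdeg: "gev (fls_subdegree c) c"
  by (simp add: gev_def)

lemma box_scale:
  fixes c :: "'a::field fls"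
  assumes "c \<noteq> 0"
  shows "(\<lambda>v. c *s v) ` lbox e = lbox (\<lambda>r. e r + fls_subdegree c)"
proof
  show "(\<lambda>v. c *s v) ` lbox e \<subseteq> lbox (\<lambda>r. e r + fls_subdegree c)"
  proof (clarsimp simp: lbox_def)
    fix x :: "'a fls ^3" and r
    assume "\<forall>r. gev (e r) (x $ r)"
    then have "gev (fls_subdegree c + e r) (c * x $ r)"
      using gev_mult[OF gev_subdeg] by blast
    then show "gev (e r + fls_subdegree c) (c * x $ r)" by (simp add: add.commute)
  qed
  show "lbox (\<lambda>r. e r + fls_subdegree c) \<subseteq> (\<lambda>v. c *s v) ` lbox e"
  proof
    fix x :: "'a fls ^3"
    assume x: "x \<in> lbox (\<lambda>r. e r + fls_subdegree c)"
    have "inverse c *s x \<in> lbox e"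
    proof (clarsimp simp: lbox_def)
      fix r
      have "gev (e r + fls_subdegree c) (x $ r)" using x by (auto simp: lbox_def)
      then have "gev (fls_subdegree (inverse c) + (e r + fls_subdegree c)) (inverse c * x $ r)"
        by (rule gev_mult[OF gev_subdeg])
      then show "gev (e r) (inverse c * x $ r)" by (simp add: fls_inverse_subdegree)
    qed
    moreover have "x = c *s (inverse c *s x)"
      using assms by (simp add: vector_smult_assoc)
    ultimately show "x \<in> (\<lambda>v. c *s v) ` lbox e" by blast
  qed
qed

lemma box_mono_iff: "lbox e \<subseteq> (lbox f :: ('a::field fls ^3) set) \<longleftrightarrow> (\<forall>r. f r \<le> e r)"
proof
  assume "\<forall>r. f r \<le> e r"
  then show "lbox e \<subseteq> lbox f" by (auto simp: lbox_def intro: gev_mono)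
next
  assume sub: "lbox e \<subseteq> (lbox f :: ('a::field fls ^3) set)"
  show "\<forall>r. f r \<le> e r"
  proof
    fix r
    let ?x = "(\<chi> i. if i = r then fls_X_intpow (e r) else 0) :: 'a fls ^3"
    have "?x \<in> lbox e" by (auto simp: lbox_def gev_def)
    then have "?x \<in> lbox f" using sub by blast
    then have "gev (f r) (fls_X_intpow (e r) :: 'a fls)" by (auto simp: lbox_def dest: spec[of _ r])
    then show "f r \<le> e r" by (simp add: gev_def)
  qed
qed

lemma box_inj: "lbox e = (lbox f :: ('a::field fls ^3) set) \<Longrightarrow> e = f"
proof
  fix r assume "lbox e = (lbox f :: ('a::field fls ^3) set)"
  then have "\<forall>r. f r \<le> e r" "\<forall>r. e r \<le> f r" using box_mono_iff[of e f] box_mono_iff[of f e] by auto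
  then show "e r = f r" by (meson order_antisym)
qed

lemma lat_class_self: "L \<in> lat_class L"
  unfolding lat_class_def
  apply (rule CollectI)
  apply (rule exI[of _ 1])
  by simp

lemma lat_class_eq: "lat_class L = lat_class L' \<Longrightarrow> \<exists>c. c \<noteq> 0 \<and> L = (\<lambda>v. c *s v) ` L'"
proof -
  assume "lat_class L = lat_class L'"
  then have "L \<in> lat_class L'" using lat_class_self[of L] by simp
  then obtain c where "c \<noteq> 0" "L = (\<lambda>v. c *s v) ` L'" unfolding lat_class_def by auto
  then show ?thesis by blast
qed

lemma mem_lat_class_box:
  "L \<in> lat_class (lbox e :: ('a::field fls ^3) set) \<longleftrightarrow> (\<exists>m. L = lbox (\<lambda>r. e r + m))"
proof
  assume "L \<in> lat_class (lbox e)"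
  then obtain c :: "'a fls" where "c \<noteq> 0" "L = (\<lambda>v. c *s v) ` lbox e" unfolding lat_class_def by blast
  then show "\<exists>m. L = lbox (\<lambda>r. e r + m)" using box_scale by blast
next
  assume "\<exists>m. L = lbox (\<lambda>r. e r + m)"
  then obtain m where "L = lbox (\<lambda>r. e r + m)" by blast
  then have "L = (\<lambda>v. fls_X_intpow m *s v) ` lbox e"
    using box_scale[of "fls_X_intpow m :: 'a fls" e] by simp
  then show "L \<in> lat_class (lbox e)" unfolding lat_class_def
    using fls_X_intpow_nonzero by blast
qed

lemma mat_smult_comm: "(N :: 'b::field ^'n^'m) *v (c *s x) = c *s (N *v x)"
  by (rule vector_scalar_commute)

lemma vact_lat_class:
  "vact g (lat_class L) = lat_class ((\<lambda>x. mat_to_Finf g *v x) ` L)"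
proof -
  let ?N = "mat_to_Finf g"
  have eq: "(\<lambda>x. ?N *v x) ` ((\<lambda>v. c *s v) ` L) = (\<lambda>v. c *s v) ` ((\<lambda>x. ?N *v x) ` L)" for c
    by (simp add: image_image mat_smult_comm)
  have "vact g (lat_class L) = {(\<lambda>x. ?N *v x) ` ((\<lambda>v. c *s v) ` L) | c. c \<noteq> 0}"
    unfolding vact_def lat_class_def by blast
  also have "\<dots> = {(\<lambda>v. c *s v) ` ((\<lambda>x. ?N *v x) ` L) | c. c \<noteq> 0}"
    by (simp only: eq)
  finally show ?thesis unfolding lat_class_def .
qed

lemma xinv: "fls_shift (-a) 1 * fls_shift a (1::'a::field fls) = 1"
  using fls_X_intpow_times_fls_X_intpow[of a "-a", where 'a='a] by simp

lemma lattice_span_diag: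
  "lattice_span (\<chi> r s. if r = s then fls_X_intpow (e r) else 0) = (lbox e :: ('a::field fls^3) set)"
proof -
  have mv: "((\<chi> r s. if r = s then fls_X_intpow (e r) else 0) *v c) $ r = fls_X_intpow (e r) * (c $ r)"
    for c :: "'a fls ^3" and r
  proof -
    have "((\<chi> r s. if r = s then fls_X_intpow (e r) else 0) *v c) $ r
        = (\<Sum>s\<in>UNIV. (if r = s then fls_X_intpow (e r) else 0) * c $ s)"
      by (simp add: matrix_vector_mult_def)
    also have "\<dots> = (\<Sum>s\<in>UNIV. if r = s then fls_X_intpow (e r) * c $ s else 0)"
      by (rule sum.cong) auto
    also have "\<dots> = fls_X_intpow (e r) * c $ r"
      by (simp add: sum.delta')
    finally show ?thesis .
  qed
  show ?thesis
  proof (intro set_eqI iffI)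
    fix x :: "'a fls ^3"
    assume "x \<in> lattice_span (\<chi> r s. if r = s then fls_X_intpow (e r) else 0)"
    then obtain c :: "'a fls ^3" where c: "\<forall>i. c $ i \<in> O_inf" and x: "x = (\<chi> r s. if r = s then fls_X_intpow (e r) else 0) *v c"
      unfolding lattice_span_def by blast
    show "x \<in> lbox e"
    proof (clarsimp simp: lbox_def)
      fix r
      have g0: "gev 0 (c $ r)" using c by (auto simp: O_inf_def gev_def)
      have "gev (e r + 0) (fls_X_intpow (e r) * c $ r)"
        by (rule gev_mult[OF _ g0]) (auto simp: gev_def)
      then show "gev (e r) (x $ r)" using x mv by simp
    qed
  next
    fix x :: "'a fls ^3"
    assume x: "x \<in> lbox e"
    let ?c = "(\<chi> r. fls_X_intpow (- e r) * x $ r) :: 'a fls ^3"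
    have "\<forall>i. ?c $ i \<in> O_inf"
    proof
      fix i
      have "gev (- e i + e i) (fls_X_intpow (- e i) * x $ i :: 'a fls)"
        by (rule gev_mult) (use x in \<open>auto simp: lbox_def gev_def\<close>)
      then show "?c $ i \<in> O_inf" by (simp add: gev_def O_inf_def)
    qed
    moreover have "x = (\<chi> r s. if r = s then fls_X_intpow (e r) else 0) *v ?c"
      by (simp add: vec_eq_iff mv mult.assoc[symmetric] xinv)
    ultimately show "x \<in> lattice_span (\<chi> r s. if r = s then fls_X_intpow (e r) else 0)"
      unfolding lattice_span_def by blast
  qed
qed

definition dd :: "nat \<Rightarrow> nat \<Rightarrow> 3 \<Rightarrow> int" where
  "dd j k = (\<lambda>r. if r = 1 then 0 else if r = 2 then int j else int k)"

lemma vtx_box: "vtx j k = lat_class (lbox (dd j k))"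
proof -
  have "(\<chi> r s. if r = s then (if r = 1 then 1 else if r = 2 then fls_X ^ j else fls_X ^ k) else 0)
      = (\<chi> r s. if r = s then fls_X_intpow (dd j k r) else (0::'a fls))"
  proof -
    have "\<And>r. (if r = 1 then 1 else if r = 2 then fls_X ^ j else fls_X ^ k) = (fls_X_intpow (dd j k r) :: 'a fls)"
      by (simp add: dd_def fls_X_power_conv_shift_1)
    then show ?thesis by (simp only:)
  qed
  then show ?thesis unfolding vtx_def by (simp add: lattice_span_diag)
qed




lemma fls_const_sum: "fls_const (\<Sum>i\<in>A. f i) = (\<Sum>i\<in>A. fls_const (f i) :: 'a::field fls)"
  by (induction A rule: infinite_finite_induct) (auto simp: fls_plus_const[symmetric])

abbreviation mpc :: "'a::field poly \<Rightarrow> 'a fls poly" where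
  "mpc p \<equiv> map_poly fls_const p"

lemma ptf_alt: "poly_to_Finf p = poly (mpc p) fls_X_inv"
  by (simp add: poly_to_Finf_def poly_altdef degree_map_poly coeff_map_poly)

lemma mpc_add: "mpc (p + q) = mpc p + mpc q"
  by (rule poly_eqI) (simp add: coeff_map_poly fls_plus_const)

lemma mpc_diff: "mpc (p - q) = mpc p - mpc q"
  by (rule poly_eqI) (simp add: coeff_map_poly fls_minus_const)

lemma mpc_mult: "mpc (p * q) = mpc p * mpc q"
  by (rule poly_eqI) (simp add: coeff_map_poly coeff_mult fls_const_sum)

lemma ptf_add: "poly_to_Finf (p + q) = poly_to_Finf p + poly_to_Finf q"
  by (simp add: ptf_alt mpc_add)

lemma ptf_diff: "poly_to_Finf (p - q) = poly_to_Finf p - poly_to_Finf q"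
  by (simp add: ptf_alt mpc_diff)

lemma ptf_mult: "poly_to_Finf (p * q) = poly_to_Finf p * poly_to_Finf q"
  by (simp add: ptf_alt mpc_mult)

lemma ptf_const: "poly_to_Finf [:c:] = fls_const c"
  by (simp add: poly_to_Finf_def)

lemma det_mat_to_Finf: "det (mat_to_Finf g) = poly_to_Finf (det g)"
  by (simp add: det_3 mat_to_Finf_def ptf_add ptf_diff ptf_mult)

lemma det_pr: "det (pr g) = poly (det g) 0"
  by (simp add: det_3 pr_def)

lemma ptf_nth_deg: "fls_nth (poly_to_Finf p) (- int (degree p)) = lead_coeff p"
proof -
  have "fls_nth (poly_to_Finf p) (- int (degree p))
      = (\<Sum>i\<le>degree p. coeff p i * (if - int (degree p) = - int i then 1 else 0))"
    by (simp add: poly_to_Finf_def fls_nth_sum)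
  also have "\<dots> = (\<Sum>i\<le>degree p. if degree p = i then coeff p i else 0)"
    by (rule sum.cong) auto
  also have "\<dots> = lead_coeff p" by (simp add: sum.delta)
  finally show ?thesis .
qed

lemma gev_ptf: "gev K (poly_to_Finf p) \<Longrightarrow> p \<noteq> 0 \<Longrightarrow> K \<le> - int (degree p)"
proof -
  assume g: "gev K (poly_to_Finf p)" and p: "p \<noteq> 0"
  have nz: "fls_nth (poly_to_Finf p) (- int (degree p)) \<noteq> 0" using p by (simp add: ptf_nth_deg)
  then have "poly_to_Finf p \<noteq> 0" by auto
  then have "K \<le> fls_subdegree (poly_to_Finf p)" using g by (simp add: gev_def)
  also have "\<dots> \<le> - int (degree p)" by (rule fls_subdegree_leI[OF nz])
  finally show ?thesis .
qed

definition cm :: "'a::field ^3^3 \<Rightarrow> 'a poly ^3^3" where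
  "cm M = (\<chi> r s. [:M $ r $ s:])"

lemma det_cm: "det (cm M) = [:det M:]"
  by (simp add: det_3 cm_def)

lemma pr_cm: "pr (cm M) = M"
  by (simp add: pr_def cm_def vec_eq_iff)

lemma mat_to_Finf_cm: "mat_to_Finf (cm M) = (\<chi> r s. fls_const (M $ r $ s))"
  by (simp add: mat_to_Finf_def cm_def ptf_const)

lemma unit_det: "is_unit (det g) \<Longrightarrow> \<exists>c. det g = [:c:] \<and> c \<noteq> 0"
  using is_unit_poly_iff[of "det g"] by auto




lemma mv_axis: "(N *v (\<chi> i. if i = s then a else 0)) $ r = N $ r $ s * (a::'a::field fls)"
proof -
  have "(N *v (\<chi> i. if i = s then a else 0)) $ r = (\<Sum>t\<in>UNIV. N $ r $ t * (if t = s then a else 0))"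
    by (simp add: matrix_vector_mult_def)
  also have "\<dots> = (\<Sum>t\<in>UNIV. if t = s then N $ r $ t * a else 0)"
    by (rule sum.cong) auto
  also have "\<dots> = N $ r $ s * a" by (simp add: sum.delta)
  finally show ?thesis .
qed

lemma axis_box: "(\<chi> i. if i = s then fls_X_intpow (e s) else 0) \<in> (lbox e :: ('a::field fls^3) set)"
  by (auto simp: lbox_def gev_def)

lemma box_lemma:
  fixes N :: "'a::field fls ^3^3"
  assumes dN: "det N \<noteq> 0" "fls_subdegree (det N) = 0"
    and img: "(\<lambda>x. N *v x) ` lbox e = lbox f"
  shows "f 1 + f 2 + f 3 = e 1 + e 2 + e 3" and "\<And>r s. gev (f r - e s) (N $ r $ s)"
proof -
  show ent: "gev (f r - e s) (N $ r $ s)" for r s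
  proof -
    have "N *v (\<chi> i. if i = s then fls_X_intpow (e s) else 0) \<in> lbox f"
      using img axis_box[of s e] by blast
    then have "gev (f r) (N $ r $ s * fls_X_intpow (e s))"
      by (auto simp: lbox_def mv_axis)
    then have "gev (f r + - e s) (N $ r $ s * fls_X_intpow (e s) * fls_X_intpow (- e s))"
      by (rule gev_mult) (simp add: gev_def)
    then show ?thesis by (simp add: mult.assoc xinv)
  qed
  have "gev (f 1 + f 2 + f 3 + - e 1 + - e 2 + - e 3) (det N)"
    by (rule det_weighted[where a=f and b="\<lambda>s. - e s"]) (use ent in simp)
  then have le1: "f 1 + f 2 + f 3 \<le> e 1 + e 2 + e 3" using dN by (simp add: gev_def)
  define y where "y s = ((\<chi> i. if i = s then fls_X_intpow (f s) else 0) :: 'a fls ^3)" for s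
  have "\<forall>s. \<exists>x. x \<in> lbox e \<and> N *v x = y s"
  proof
    fix s
    have "y s \<in> lbox f" unfolding y_def by (rule axis_box)
    then show "\<exists>x. x \<in> lbox e \<and> N *v x = y s" using img by (metis imageE)
  qed
  then obtain xs where xs: "\<And>s. xs s \<in> lbox e" "\<And>s. N *v xs s = y s" by metis
  define X where "X = (\<chi> r s. xs s $ r)"
  have NX: "N ** X = (\<chi> r s. if r = s then fls_X_intpow (f s) else 0)"
  proof -
    have "(N ** X) $ r $ s = (N *v xs s) $ r" for r s
      by (simp add: matrix_matrix_mult_def matrix_vector_mult_def X_def)
    then show ?thesis by (simp add: vec_eq_iff xs(2) y_def)
  qed
  have "det (N ** X) = fls_X_intpow (f 1) * fls_X_intpow (f 2) * fls_X_intpow (f 3)"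
    unfolding NX det_3 by simp
  also have "\<dots> = fls_X_intpow (f 1 + f 2 + f 3)"
    by (simp only: fls_X_intpow_times_fls_X_intpow)
  finally have dNX: "det N * det X = fls_X_intpow (f 1 + f 2 + f 3)" by (simp add: det_mul)
  then have dX: "det X \<noteq> 0"
    by (metis fls_X_intpow_nonzero mult_zero_right)
  have "gev (e 1 + e 2 + e 3 + 0 + 0 + 0) (det X)"
    by (rule det_weighted[where a=e and b="\<lambda>s. 0"]) (use xs(1) in \<open>auto simp: X_def lbox_def\<close>)
  then have "e 1 + e 2 + e 3 \<le> fls_subdegree (det X)" using dX by (simp add: gev_def)
  moreover have "fls_subdegree (det N * det X) = f 1 + f 2 + f 3" by (simp add: dNX)
  then have "fls_subdegree (det X) = f 1 + f 2 + f 3" using dN dX by simp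
  ultimately show "f 1 + f 2 + f 3 = e 1 + e 2 + e 3" using le1 by simp
qed




definition Zp :: "(3 \<Rightarrow> int) \<Rightarrow> ('a::field ^3^3) set" where
  "Zp e = {M. \<forall>r s. e s < e r \<longrightarrow> M $ r $ s = 0}"

definition Pat :: "(3 \<Rightarrow> int) \<Rightarrow> ('a::field ^3^3) set" where
  "Pat e = GL3F \<inter> Zp e"

lemma GL3A_det: "g \<in> GL3A \<Longrightarrow> \<exists>c. det g = [:c:] \<and> c \<noteq> 0"
  unfolding GL3A_def using is_unit_poly_iff[of "det g"] by auto

lemma det_N_GL3A:
  assumes "g \<in> GL3A"
  shows "det (mat_to_Finf g) \<noteq> 0" "fls_subdegree (det (mat_to_Finf g)) = 0"
proof -
  obtain c where "det g = [:c:]" "c \<noteq> 0" using GL3A_det[OF assms] by blast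
  then have "det (mat_to_Finf g) = fls_const c" by (simp add: det_mat_to_Finf ptf_const)
  then show "det (mat_to_Finf g) \<noteq> 0" "fls_subdegree (det (mat_to_Finf g)) = 0"
    using \<open>c \<noteq> 0\<close> by simp_all
qed

lemma pr_GL3F: "g \<in> GL3A \<Longrightarrow> pr g \<in> GL3F"
proof -
  assume "g \<in> GL3A"
  then obtain c where "det g = [:c:]" "c \<noteq> 0" using GL3A_det by blast
  then show ?thesis by (simp add: GL3F_def det_pr)
qed

lemma entries_bound:
  fixes g :: "'a::field poly ^3^3"
  assumes g: "g \<in> GL3A" and img: "(\<lambda>x. mat_to_Finf g *v x) ` lbox e = lbox f"
  shows "f 1 + f 2 + f 3 = e 1 + e 2 + e 3"
    and "\<And>r s. g $ r $ s \<noteq> 0 \<Longrightarrow> f r \<le> e s"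
proof -
  note bl = box_lemma[OF det_N_GL3A[OF g] img]
  show "f 1 + f 2 + f 3 = e 1 + e 2 + e 3" by (rule bl(1))
  fix r s assume nz: "g $ r $ s \<noteq> 0"
  have "gev (f r - e s) (poly_to_Finf (g $ r $ s))"
    using bl(2)[of r s] by (simp add: mat_to_Finf_def)
  from gev_ptf[OF this nz] show "f r \<le> e s" by simp
qed

lemma stab_sub: "g \<in> stab_vertex (lat_class (lbox e)) \<Longrightarrow> pr g \<in> Pat e"
proof -
  assume "g \<in> stab_vertex (lat_class (lbox e))"
  then have g: "g \<in> GL3A" and fx: "vact g (lat_class (lbox e)) = lat_class (lbox e)"
    unfolding stab_vertex_def by auto
  let ?L = "(\<lambda>x. mat_to_Finf g *v x) ` lbox e"
  have "lat_class ?L = lat_class (lbox e)" using fx by (simp add: vact_lat_class)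
  then have "?L \<in> lat_class (lbox e)" using lat_class_self[of ?L] by simp
  then obtain m where m: "?L = lbox (\<lambda>r. e r + m)" using mem_lat_class_box by blast
  note eb = entries_bound[OF g m]
  from eb(1) have "m = 0" by simp
  have "pr g $ r $ s = 0" if "e s < e r" for r s
  proof -
    have "g $ r $ s = 0" using eb(2)[of r s] that \<open>m = 0\<close> by force
    then show ?thesis by (simp add: pr_def)
  qed
  then show "pr g \<in> Pat e" using pr_GL3F[OF g] by (simp add: Pat_def Zp_def)
qed

lemma Zp_mult: "M \<in> Zp e \<Longrightarrow> B \<in> Zp e \<Longrightarrow> M ** B \<in> Zp e"
proof -
  assume M: "M \<in> Zp e" and B: "B \<in> Zp e"
  have "(M ** B) $ r $ s = 0" if "e s < e r" for r s
  proof -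
    have prod0: "M $ r $ t * B $ t $ s = 0" for t
    proof (cases "e t < e r")
      case True then show ?thesis using M by (simp add: Zp_def)
    next
      case False then have "e s < e t" using that by simp
      then show ?thesis using B by (simp add: Zp_def)
    qed
    have "(\<Sum>t\<in>UNIV. M $ r $ t * B $ t $ s) = 0" by (rule sum.neutral) (use prod0 in blast)
    then show ?thesis by (simp add: matrix_matrix_mult_def)
  qed
  then show ?thesis by (simp add: Zp_def)
qed

lemma Zp_one: "mat 1 \<in> Zp e"
  by (auto simp: Zp_def mat_def)

lemma Zp_inv:
  fixes M :: "'a::{finite,field} ^3^3"
  assumes M: "M \<in> Zp e" and d: "det M \<noteq> 0"
  shows "\<exists>B\<in>Zp e. M ** B = mat 1"
proof -
  have "invertible M" using d by (simp add: invertible_det_nz)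
  then obtain M' where M': "M' ** M = mat 1" using invertible_left_inverse by blast
  have inj: "inj_on ((**) M) (Zp e)"
  proof (rule inj_onI)
    fix X Y assume "M ** X = M ** Y"
    then have "M' ** (M ** X) = M' ** (M ** Y)" by simp
    then show "X = Y" by (simp add: matrix_mul_assoc M')
  qed
  have sub: "(**) M ` Zp e \<subseteq> Zp e" using Zp_mult[OF M] by blast
  have "(**) M ` Zp e = Zp e" using endo_inj_surj[OF finite sub inj] by blast
  then have "mat 1 \<in> (**) M ` Zp e" using Zp_one by blast
  then obtain B where "B \<in> Zp e" "mat 1 = M ** B" by (rule imageE)
  then show ?thesis by metis
qed

lemma const_box:
  fixes M :: "'a::field ^3^3"
  assumes M: "M \<in> Zp e"
  shows "(\<lambda>x. (\<chi> r s. fls_const (M $ r $ s)) *v x) ` lbox e \<subseteq> lbox e"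
proof clarify
  fix x :: "'a fls ^3" assume x: "x \<in> lbox e"
  show "(\<chi> r s. fls_const (M $ r $ s)) *v x \<in> lbox e"
    unfolding lbox_def
  proof (clarify)
    fix r
    have "gev (e r) (fls_const (M $ r $ s) * x $ s)" for s
    proof (cases "M $ r $ s = 0")
      case True then show ?thesis by simp
    next
      case False
      then have "e r \<le> e s" using M by (force simp: Zp_def)
      moreover have "gev (0 + e s) (fls_const (M $ r $ s) * x $ s)"
        by (rule gev_mult) (use x in \<open>auto simp: gev_def lbox_def\<close>)
      ultimately show ?thesis by (auto intro: gev_mono)
    qed
    then show "gev (e r) (((\<chi> r s. fls_const (M $ r $ s)) *v x) $ r)"
      by (simp add: matrix_vector_mult_def gev_sum)
  qed
qed

lemma cm_GL3A: "M \<in> GL3F \<Longrightarrow> cm M \<in> GL3A"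
  by (simp add: GL3A_def GL3F_def det_cm is_unit_const_poly_iff dvd_field_iff)

lemma const_fix:
  fixes M :: "'a::{finite,field} ^3^3"
  assumes M: "M \<in> Pat e"
  shows "vact (cm M) (lat_class (lbox e)) = lat_class (lbox e)"
proof -
  have Mz: "M \<in> Zp e" and d: "det M \<noteq> 0" using M by (auto simp: Pat_def GL3F_def)
  obtain B where B: "B \<in> Zp e" "M ** B = mat 1" using Zp_inv[OF Mz d] by blast
  let ?N = "(\<chi> r s. fls_const (M $ r $ s)) :: 'a fls ^3^3"
  let ?NB = "(\<chi> r s. fls_const (B $ r $ s)) :: 'a fls ^3^3"
  have NNB: "?N ** ?NB = mat 1"
  proof -
    have "(?N ** ?NB) $ r $ s = fls_const ((M ** B) $ r $ s)" for r s
      by (simp add: matrix_matrix_mult_def fls_const_sum)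
    then show ?thesis using B(2) by (simp add: vec_eq_iff mat_def)
  qed
  have s1: "(\<lambda>x. ?N *v x) ` lbox e \<subseteq> lbox e" by (rule const_box[OF Mz])
  have s2: "(\<lambda>x. ?NB *v x) ` lbox e \<subseteq> lbox e" by (rule const_box[OF B(1)])
  have "lbox e \<subseteq> (\<lambda>x. ?N *v x) ` lbox e"
  proof
    fix y :: "'a fls ^3" assume y: "y \<in> lbox e"
    have "y = ?N *v (?NB *v y)" by (simp add: matrix_vector_mul_assoc NNB)
    moreover have "?NB *v y \<in> lbox e" using s2 y by blast
    ultimately show "y \<in> (\<lambda>x. ?N *v x) ` lbox e" by blast
  qed
  then have "(\<lambda>x. ?N *v x) ` lbox e = lbox e" using s1 by blast
  then show ?thesis by (simp add: vact_lat_class mat_to_Finf_cm)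
qed

lemma stab_char:
  "pr ` stab_vertex (lat_class (lbox e)) = (Pat e :: ('a::{finite,field} ^3^3) set)"
proof
  show "pr ` stab_vertex (lat_class (lbox e)) \<subseteq> (Pat e :: ('a ^3^3) set)"
    using stab_sub by blast
  show "(Pat e :: ('a ^3^3) set) \<subseteq> pr ` stab_vertex (lat_class (lbox e))"
  proof
    fix M :: "'a ^3^3" assume M: "M \<in> Pat e"
    have "cm M \<in> stab_vertex (lat_class (lbox e))"
      using const_fix[OF M] cm_GL3A[of M] M by (simp add: stab_vertex_def Pat_def)
    then show "M \<in> pr ` stab_vertex (lat_class (lbox e))" using pr_cm[of M] by force
  qed
qed




lemma Pat_dd:
  assumes "j \<le> k"
  shows "(Pat (dd j k) :: ('a::field ^3^3) set) =
     (if j = 0 \<and> k = 0 then GL3F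
      else if j = 0 \<and> j < k then P0
      else if 0 < j \<and> j = k then P2
      else Borel)"
proof -
  have Z: "Zp (dd j k) = {M :: 'a^3^3.
     (int j < 0 \<longrightarrow> M $ 1 $ 2 = 0) \<and> (int k < 0 \<longrightarrow> M $ 1 $ 3 = 0) \<and>
     (0 < int j \<longrightarrow> M $ 2 $ 1 = 0) \<and> (int k < int j \<longrightarrow> M $ 2 $ 3 = 0) \<and>
     (0 < int k \<longrightarrow> M $ 3 $ 1 = 0) \<and> (int j < int k \<longrightarrow> M $ 3 $ 2 = 0)}"
    unfolding Zp_def forall_3 by (simp add: dd_def)
  show ?thesis
  proof (cases "j = 0")
    case j0: True
    show ?thesis
    proof (cases "k = 0")
      case True
      then have "Zp (dd j k) = (UNIV :: ('a^3^3) set)" using j0 Z by simp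
      then show ?thesis using j0 True by (simp add: Pat_def)
    next
      case False
      then have "Zp (dd j k) = {M :: 'a^3^3. M $ 3 $ 1 = 0 \<and> M $ 3 $ 2 = 0}" using j0 Z by simp
      then show ?thesis using j0 False by (auto simp: Pat_def P0_def)
    qed
  next
    case jp: False
    show ?thesis
    proof (cases "j = k")
      case True
      then have "Zp (dd j k) = {M :: 'a^3^3. M $ 2 $ 1 = 0 \<and> M $ 3 $ 1 = 0}" using jp Z by simp
      then show ?thesis using jp True by (auto simp: Pat_def P2_def)
    next
      case False
      then have "Zp (dd j k) = {M :: 'a^3^3. M $ 2 $ 1 = 0 \<and> M $ 3 $ 1 = 0 \<and> M $ 3 $ 2 = 0}"
        using jp Z assms by simp
      then show ?thesis using jp False by (auto simp: Pat_def Borel_def)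
    qed
  qed
qed

lemma part1:
  "j \<le> k \<Longrightarrow> pr ` stab_vertex (vtx j k :: ('a::{finite,field} fls ^3) set set) =
            (if j = 0 \<and> k = 0 then GL3F
             else if j = 0 \<and> j < k then P0
             else if 0 < j \<and> j = k then P2
             else Borel)"
  by (simp add: vtx_box stab_char Pat_dd)

lemma sorted_wrt_cmp: "sorted_wrt R xs \<Longrightarrow> a \<in> set xs \<Longrightarrow> b \<in> set xs \<Longrightarrow> a = b \<or> R a b \<or> R b a"
  by (induction xs) auto

definition ssum :: "(3 \<Rightarrow> int) \<Rightarrow> int" where "ssum E = E 1 + E 2 + E 3"

lemma fun3_eqI: "(\<And>r. f r = (g r :: int)) \<Longrightarrow> f = g" by (rule ext)

lemma part2:
  fixes W :: "('a::{finite,field} fls ^3) set set set"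
  assumes simp: "is_simplex W" and allv: "\<forall>v\<in>W. \<exists>j k :: nat. j \<le> k \<and> v = vtx j k"
  shows "pr ` stab_simplex W = (\<Inter>v\<in>W. pr ` stab_vertex v)"
proof -
  obtain Ls where Ls: "Ls \<noteq> []" "W = lat_class ` set Ls" "sorted_wrt (\<supset>) Ls"
      "\<forall>L\<in>set Ls. (\<lambda>v. fls_X *s v) ` hd Ls \<subset> L"
    using simp unfolding is_simplex_def by blast
  have Wbox: "\<exists>e. v = lat_class (lbox e)" if "v \<in> W" for v
    using allv that vtx_box by metis
  have Lbox: "\<exists>E. L = lbox E" if L: "L \<in> set Ls" for L
  proof -
    obtain e where "lat_class L = lat_class (lbox e)" using Wbox L Ls(2) by blast
    then have "L \<in> lat_class (lbox e)" using lat_class_self[of L] by simp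
    then show ?thesis using mem_lat_class_box by blast
  qed
  define H where "H = hd Ls"
  have Hin: "H \<in> set Ls" using Ls(1) by (simp add: H_def)
  obtain E0 where E0: "H = lbox E0" using Lbox Hin by blast
  have sub: "L \<subseteq> H" if "L \<in> set Ls" for L
  proof -
    obtain T where "Ls = H # T" using Ls(1) H_def by (cases Ls) auto
    then show ?thesis using Ls(3) that by auto
  qed
  have XH: "(\<lambda>v. fls_X *s v) ` H = lbox (\<lambda>r. E0 r + 1)"
    using box_scale[of "fls_X :: 'a fls" E0] E0 by simp
  have bnd: "ssum E0 \<le> ssum E \<and> ssum E \<le> ssum E0 + 2" if "lbox E \<in> set Ls" for E
  proof -
    have "lbox E \<subseteq> (lbox E0 :: ('a fls ^3) set)" using sub[OF that] E0 by simp
    then have lo: "\<forall>r. E0 r \<le> E r" by (rule iffD1[OF box_mono_iff])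
    have ss0: "(\<lambda>v. fls_X *s v) ` H \<subset> lbox E" using Ls(4) that unfolding H_def by blast
    have ss: "lbox (\<lambda>r. E0 r + 1) \<subset> (lbox E :: ('a fls ^3) set)" using ss0 by (simp only: XH)
    then have "lbox (\<lambda>r. E0 r + 1) \<subseteq> (lbox E :: ('a fls ^3) set)" by (rule psubset_imp_subset)
    then have hi: "\<forall>r. E r \<le> E0 r + 1" by (rule iffD1[OF box_mono_iff])
    have l: "E0 1 \<le> E 1" "E0 2 \<le> E 2" "E0 3 \<le> E 3" by (rule lo[rule_format])+
    have h: "E 1 \<le> E0 1 + 1" "E 2 \<le> E0 2 + 1" "E 3 \<le> E0 3 + 1" by (rule hi[rule_format])+
    have "ssum E \<noteq> ssum E0 + 3"
    proof
      assume "ssum E = ssum E0 + 3"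
      then have "E 1 = E0 1 + 1" "E 2 = E0 2 + 1" "E 3 = E0 3 + 1" using l h unfolding ssum_def by linarith+
      then have "E = (\<lambda>r. E0 r + 1)"
      proof (intro fun3_eqI)
        fix r show "E r = E0 r + 1" using exhaust_3[of r] \<open>E 1 = E0 1 + 1\<close> \<open>E 2 = E0 2 + 1\<close> \<open>E 3 = E0 3 + 1\<close> by (elim disjE) (simp only:)+
      qed
      then show False using ss by simp
    qed
    then show ?thesis using l h unfolding ssum_def by linarith
  qed
  have key: "vact g v = v" if g: "g \<in> stab_simplex W" and v: "v \<in> W" for g v
  proof -
    have gA: "g \<in> GL3A" and gW: "vact g ` W = W" using g by (auto simp: stab_simplex_def)
    obtain L1 where L1: "L1 \<in> set Ls" "v = lat_class L1" using v Ls(2) by blast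
    obtain E1 where E1: "L1 = lbox E1" using Lbox L1(1) by blast
    have "vact g v \<in> W" using gW v by blast
    then obtain L2 where L2: "L2 \<in> set Ls" "vact g v = lat_class L2" using Ls(2) by blast
    obtain E2 where E2: "L2 = lbox E2" using Lbox L2(1) by blast
    let ?L = "(\<lambda>x. mat_to_Finf g *v x) ` lbox E1"
    have "lat_class ?L = lat_class (lbox E2)" using L1(2) L2(2) E1 E2 by (simp add: vact_lat_class)
    then have "?L \<in> lat_class (lbox E2)" using lat_class_self[of ?L] by simp
    then obtain m where m: "?L = lbox (\<lambda>r. E2 r + m)" using mem_lat_class_box by blast
    have eq: "ssum E2 + 3 * m = ssum E1" using entries_bound(1)[OF gA m] by (simp add: ssum_def)
    have b1: "ssum E0 \<le> ssum E1 \<and> ssum E1 \<le> ssum E0 + 2" using bnd L1(1) E1 by simp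
    have b2: "ssum E0 \<le> ssum E2 \<and> ssum E2 \<le> ssum E0 + 2" using bnd L2(1) E2 by simp
    have "m = 0" using eq b1 b2 by presburger
    then have seq: "ssum E1 = ssum E2" using eq by simp
    have "L1 = L2"
    proof -
      have c: "L1 = L2 \<or> L1 \<supset> L2 \<or> L2 \<supset> L1" using sorted_wrt_cmp[OF Ls(3) L1(1) L2(1)] by blast
      have no: False if "lbox Ea \<supset> (lbox Eb :: ('a fls ^3) set)" "ssum Ea = ssum Eb" for Ea Eb :: "3 \<Rightarrow> int"
      proof -
        have "lbox Eb \<subseteq> (lbox Ea :: ('a fls ^3) set)" using that(1) by (rule psubset_imp_subset)
        then have le: "\<forall>r. Ea r \<le> Eb r" by (rule iffD1[OF box_mono_iff])
        have "Ea = Eb"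
        proof (rule fun3_eqI)
          fix r
          have "Ea 1 \<le> Eb 1" "Ea 2 \<le> Eb 2" "Ea 3 \<le> Eb 3" by (rule le[rule_format])+
          then have "Ea 1 = Eb 1" "Ea 2 = Eb 2" "Ea 3 = Eb 3" using that(2) unfolding ssum_def by linarith+
          then show "Ea r = Eb r" using exhaust_3[of r] by (elim disjE) (simp only:)+
        qed
        then show False using that(1) by simp
      qed
      show ?thesis using c no[of E1 E2] no[of E2 E1] E1 E2 seq by auto
    qed
    then show ?thesis using L1(2) L2(2) by simp
  qed
  show ?thesis
  proof
    show "pr ` stab_simplex W \<subseteq> (\<Inter>v\<in>W. pr ` stab_vertex v)"
    proof clarify
      fix g v assume g: "g \<in> stab_simplex W" and v: "v \<in> W"
      have "g \<in> stab_vertex v" using key[OF g v] g by (simp add: stab_simplex_def stab_vertex_def)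
      then show "pr g \<in> pr ` stab_vertex v" by blast
    qed
    show "(\<Inter>v\<in>W. pr ` stab_vertex v) \<subseteq> pr ` stab_simplex W"
    proof
      fix M :: "'a ^3^3" assume M: "M \<in> (\<Inter>v\<in>W. pr ` stab_vertex v)"
      have P: "M \<in> Pat e" if "lat_class (lbox e) \<in> W" for e
        using M that stab_char[of e] by blast
      have vW: "lat_class H \<in> W" using Ls(2) Hin by blast
      then have "M \<in> GL3F" using P[of E0] E0 by (simp add: Pat_def)
      then have cA: "cm M \<in> GL3A" by (rule cm_GL3A)
      have fx: "vact (cm M) v = v" if vW': "v \<in> W" for v
      proof -
        obtain e where e: "v = lat_class (lbox e)" using Wbox vW' by blast
        show ?thesis using const_fix[OF P[of e]] vW' e by simp
      qed
      then have "vact (cm M) ` W = W" by simp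
      then have "cm M \<in> stab_simplex W" using cA by (simp add: stab_simplex_def)
      then show "M \<in> pr ` stab_simplex W" using pr_cm[of M] by force
    qed
  qed
qed


theorem corollary2p10:
  shows "(\<forall>j k :: nat. j \<le> k \<longrightarrow>
            pr ` stab_vertex (vtx j k :: ('a::{finite,field} fls ^3) set set) =
            (if j = 0 \<and> k = 0 then GL3F
             else if j = 0 \<and> j < k then P0
             else if 0 < j \<and> j = k then P2
             else Borel))
       \<and> (\<forall>W :: ('a fls ^3) set set set.
            is_simplex W \<and> card W \<ge> 2 \<and>
            (\<forall>v\<in>W. \<exists>j k :: nat. j \<le> k \<and> v = vtx j k) \<longrightarrow>
            pr ` stab_simplex W = (\<Inter>v\<in>W. pr ` stab_vertex v))"
proof (intro conjI allI impI)
  fix j k :: nat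
  assume "j \<le> k"
  then show "pr ` stab_vertex (vtx j k :: ('a::{finite,field} fls ^3) set set) =
            (if j = 0 \<and> k = 0 then GL3F
             else if j = 0 \<and> j < k then P0
             else if 0 < j \<and> j = k then P2
             else Borel)" by (rule part1)
next
  fix W :: "('a fls ^3) set set set"
  assume "is_simplex W \<and> card W \<ge> 2 \<and> (\<forall>v\<in>W. \<exists>j k :: nat. j \<le> k \<and> v = vtx j k)"
  then show "pr ` stab_simplex W = (\<Inter>v\<in>W. pr ` stab_vertex v)"
    using part2[of W] by blast
qed

end
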